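(* Let $f_0,f_1\in \mathrm{PL}_0(\mathbf{I})$ and let $(a,c)$ be an orbital of $f_0$ that is not an orbital of $f_1$. Assume that every orbital $B$ of $f_1$ satisfies either $B\subseteq(a,c)$ or $B\cap(a,c)=\emptyset$. Let $(b_1,d_1),\dots,(b_n,d_n)$, with $n\ge1$, be all the orbitals of $f_1$ properly contained in $(a,c)$, in increasing order. Suppose that either (Up) $(a,c)$ is an up-bump of $f_0$ and: $a<b_1$; there is $p<c$ with $f_0|_{[p,c]}=f_1|_{[p,c]}$; $d_n=c$; if $p$ is the minimal such point then $b_nf_0\ge p$; and $b_1f_0>b_n$; or (Down) $(a,c)$ is a down-bump of $f_0$ and: $d_n<c$; there is $\rho>a$ with $f_0|_{[a,\rho]}=f_1|_{[a,\rho]}$; $b_1=a$; if $\rho$ is the maximal such point then $d_1f_0\le\rho$; and $d_nf_0<d_1$. Then $[f_0f_1^{-1},f_1^{f_0^2}]|_{[a,c]}=1$.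
   Context: $\mathrm{PL}_0(\mathbf{I})$ is the group of orientation-preserving piecewise-linear homeomorphisms of $[0,1]$ with finitely many points of non-differentiability. Functions act on the right: $tf=f(t)$, $fg=g\circ f$, $a^b=b^{-1}ab$, $[a,b]=aba^{-1}b^{-1}$. The orbitals of $f$ are the connected components (open intervals) of $\operatorname{Supp}(f)=\{x: xf\ne x\}$; an orbital $A$ is an up-bump (resp. down-bump) if $xf>x$ (resp. $xf<x$) for all $x\in A$. *)

theory Defs
  imports "HOL-Analysis.Analysis"
begin

text \<open>Elements of PL_0(I), represented as total functions real => real that are the
  identity outside [0,1] (so they are bijections of the reals and inv is the group inverse).\<close>
definition PL0 :: "(real \<Rightarrow> real) \<Rightarrow> bool" where
  "PL0 f \<longleftrightarrow> continuous_on {0..1} f \<and> strict_mono_on {0..1} f \<and> f 0 = 0 \<and> f 1 = 1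
     \<and> (\<forall>x. x \<notin> {0..1} \<longrightarrow> f x = x)
     \<and> (\<exists>S. finite S \<and> 0 \<in> S \<and> 1 \<in> S \<and> S \<subseteq> {0..1} \<and>
           (\<forall>u v. u \<in> S \<and> v \<in> S \<and> u < v \<and> {u<..<v} \<inter> S = {} \<longrightarrow>
              (\<exists>m k. \<forall>x\<in>{u..v}. f x = m * x + k)))"

definition supp :: "(real \<Rightarrow> real) \<Rightarrow> real set" where
  "supp f = {x. f x \<noteq> x}"

definition orbital :: "(real \<Rightarrow> real) \<Rightarrow> real set \<Rightarrow> bool" where
  "orbital f A \<longleftrightarrow> A \<in> components (supp f)"

definition up_bump :: "(real \<Rightarrow> real) \<Rightarrow> real set \<Rightarrow> bool" where
  "up_bump f A \<longleftrightarrow> orbital f A \<and> (\<forall>x\<in>A. f x > x)"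

definition down_bump :: "(real \<Rightarrow> real) \<Rightarrow> real set \<Rightarrow> bool" where
  "down_bump f A \<longleftrightarrow> orbital f A \<and> (\<forall>x\<in>A. f x < x)"

text \<open>Right actions: t(fg) = g(f t), so the product fg is g o f.
  Conjugation a^b = b^-1 a b, commutator [a,b] = a b a^-1 b^-1.\<close>
definition rmul :: "(real \<Rightarrow> real) \<Rightarrow> (real \<Rightarrow> real) \<Rightarrow> (real \<Rightarrow> real)" where
  "rmul f g = g \<circ> f"

definition conjg :: "(real \<Rightarrow> real) \<Rightarrow> (real \<Rightarrow> real) \<Rightarrow> (real \<Rightarrow> real)" where
  "conjg a b = rmul (rmul (inv b) a) b"

definition comm :: "(real \<Rightarrow> real) \<Rightarrow> (real \<Rightarrow> real) \<Rightarrow> (real \<Rightarrow> real)" where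
  "comm a b = rmul (rmul (rmul a b) (inv a)) (inv b)"

end

theory Submission imports Defs begin

lemma PL0_props:
  assumes "PL0 f"
  shows "strict_mono f" "bij f" "continuous_on {0..1} f" "\<forall>x. x \<notin> {0..1} \<longrightarrow> f x = x"
    "f 0 = 0" "f 1 = 1"
proof -
  have c: "continuous_on {0..1} f" and sm: "strict_mono_on {0..1} f" and f0: "f 0 = 0" and f1: "f 1 = 1"
    and out: "\<forall>x. x \<notin> {0..1} \<longrightarrow> f x = x" using assms unfolding PL0_def by auto
  have rng: "f x \<in> {0..1}" if "x \<in> {0..1}" for x
  proof -
    have "f 0 \<le> f x" using sm that by (cases "x = 0") (auto intro: strict_mono_onD[THEN less_imp_le])
    moreover have "f x \<le> f 1" using sm that by (cases "x = 1") (auto intro: strict_mono_onD[THEN less_imp_le])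
    ultimately show ?thesis using f0 f1 by auto
  qed
  show "strict_mono f"
  proof (rule strict_monoI)
    fix x y :: real assume xy: "x < y"
    show "f x < f y"
    proof (cases "x \<in> {0..1} \<and> y \<in> {0..1}")
      case True then show ?thesis using sm xy strict_mono_onD by blast
    next
      case False
      then show ?thesis using rng[of x] rng[of y] out xy by (cases "x \<in> {0..1}"; cases "y \<in> {0..1}"; auto)
    qed
  qed
  then have "inj f" using strict_mono_imp_inj_on by blast
  moreover have "surj f"
  proof -
    have "y \<in> range f" for y
    proof (cases "y \<in> {0..1}")
      case True
      then obtain x where "0 \<le> x" "x \<le> 1" "f x = y" using IVT'[of f 0 y 1] c f0 f1 by auto
      then show ?thesis by auto
    next
      case False then show ?thesis using out by (metis rangeI)
    qed
    then show ?thesis by auto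
  qed
  ultimately show "bij f" by (simp add: bij_def)
  show "continuous_on {0..1} f" "\<forall>x. x \<notin> {0..1} \<longrightarrow> f x = x" "f 0 = 0" "f 1 = 1"
    using c out f0 f1 by auto
qed

lemma comp_boundary:
  fixes u v :: real
  assumes "{u<..<v} \<in> components S"
  shows "u < v" "u \<notin> S" "v \<notin> S"
proof -
  show uv: "u < v" using in_components_nonempty[OF assms] by auto
  have sub: "{u<..<v} \<subseteq> S" using in_components_subset[OF assms] .
  show "u \<notin> S"
  proof
    assume "u \<in> S"
    then have "{u..<v} \<subseteq> S" using sub by (auto simp: subset_iff le_less)
    moreover have "(u+v)/2 \<in> {u<..<v} \<inter> {u..<v}" using uv by auto
    then have "{u<..<v} \<inter> {u..<v} \<noteq> {}" by blast
    ultimately have "{u..<v} \<subseteq> {u<..<v}"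
      by (intro components_maximal[OF assms]) (auto simp: is_interval_connected_1 is_interval_ci)
    then show False using uv by auto
  qed
  show "v \<notin> S"
  proof
    assume "v \<in> S"
    then have "{u<..v} \<subseteq> S" using sub by (auto simp: subset_iff le_less)
    moreover have "(u+v)/2 \<in> {u<..<v} \<inter> {u<..v}" using uv by auto
    then have "{u<..<v} \<inter> {u<..v} \<noteq> {}" by blast
    ultimately have "{u<..v} \<subseteq> {u<..<v}"
      by (intro components_maximal[OF assms]) (auto simp: is_interval_connected_1 is_interval_ic)
    then show False using uv by auto
  qed
qed

lemma fix_left:
  fixes f :: "real \<Rightarrow> real"
  assumes cont: "continuous_on {a..c} f" and ac: "a < c"
    and nested: "\<forall>B. B \<in> components (supp f) \<longrightarrow> B \<subseteq> {a<..<c} \<or> B \<inter> {a<..<c} = {}"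
  shows "f a = a"
proof (rule ccontr)
  assume ne: "f a \<noteq> a"
  let ?g = "\<lambda>x. f x - x"
  have cg: "continuous_on {a..c} ?g" using cont by (intro continuous_intros)
  have aa: "a \<in> {a..c}" using ac by auto
  have pos: "\<bar>?g a\<bar> > 0" using ne by simp
  from cg have "\<forall>x\<in>{a..c}. \<forall>e>0. \<exists>d>0. \<forall>x'\<in>{a..c}. dist x' x < d \<longrightarrow> dist (?g x') (?g x) < e"
    by (simp add: continuous_on_iff)
  then obtain dl where dl: "dl > 0" "\<forall>x'\<in>{a..c}. dist x' a < dl \<longrightarrow> dist (?g x') (?g a) < \<bar>?g a\<bar>"
    using aa pos by blast
  define e where "e = min (dl/2) ((c-a)/2)"
  have e: "e > 0" "e < dl" "a + e < c" using dl(1) ac unfolding e_def by (auto simp: min_def field_simps)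
  have T: "{a..a+e} \<subseteq> supp f"
  proof
    fix x assume x: "x \<in> {a..a+e}"
    then have "x \<in> {a..c}" "dist x a < dl" using e by (auto simp: dist_real_def)
    then have "dist (?g x) (?g a) < \<bar>?g a\<bar>" using dl by blast
    then have "?g x \<noteq> 0" by (auto simp: dist_real_def)
    then show "x \<in> supp f" by (simp add: supp_def)
  qed
  have asupp: "a \<in> supp f" using ne by (simp add: supp_def)
  have C: "{a..a+e} \<subseteq> connected_component_set (supp f) a"
    by (rule connected_component_maximal) (use e T in auto)
  have "connected_component_set (supp f) a \<in> components (supp f)"
    using asupp by (auto simp: components_iff)
  then have "connected_component_set (supp f) a \<subseteq> {a<..<c} \<or>
      connected_component_set (supp f) a \<inter> {a<..<c} = {}" using nested by blast
  moreover let ?z = "a+e"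
  have "a \<in> {a..a+e}" "a + e \<in> {a..a+e}" using e by auto
  then have "a \<in> connected_component_set (supp f) a" "a + e \<in> connected_component_set (supp f) a"
    using C by (meson subsetD)+
  moreover have "?z \<in> {a<..<c}" using e by auto
  ultimately show False by (metis IntI empty_iff greaterThanLessThan_iff less_irrefl subsetD)
qed

lemma fix_right:
  fixes f :: "real \<Rightarrow> real"
  assumes cont: "continuous_on {a..c} f" and ac: "a < c"
    and nested: "\<forall>B. B \<in> components (supp f) \<longrightarrow> B \<subseteq> {a<..<c} \<or> B \<inter> {a<..<c} = {}"
  shows "f c = c"
proof (rule ccontr)
  assume ne: "f c \<noteq> c"
  let ?g = "\<lambda>x. f x - x"
  have cg: "continuous_on {a..c} ?g" using cont by (intro continuous_intros)
  have aa: "c \<in> {a..c}" using ac by auto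
  have pos: "\<bar>?g c\<bar> > 0" using ne by simp
  from cg have "\<forall>x\<in>{a..c}. \<forall>e>0. \<exists>d>0. \<forall>x'\<in>{a..c}. dist x' x < d \<longrightarrow> dist (?g x') (?g x) < e"
    by (simp add: continuous_on_iff)
  then obtain dl where dl: "dl > 0" "\<forall>x'\<in>{a..c}. dist x' c < dl \<longrightarrow> dist (?g x') (?g c) < \<bar>?g c\<bar>"
    using aa pos by blast
  define e where "e = min (dl/2) ((c-a)/2)"
  have e: "e > 0" "e < dl" "a < c - e" using dl(1) ac unfolding e_def by (auto simp: min_def field_simps)
  have T: "{c-e..c} \<subseteq> supp f"
  proof
    fix x assume x: "x \<in> {c-e..c}"
    then have "x \<in> {a..c}" "dist x c < dl" using e by (auto simp: dist_real_def)
    then have "dist (?g x) (?g c) < \<bar>?g c\<bar>" using dl by blast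
    then have "?g x \<noteq> 0" by (auto simp: dist_real_def)
    then show "x \<in> supp f" by (simp add: supp_def)
  qed
  have asupp: "c \<in> supp f" using ne by (simp add: supp_def)
  have C: "{c-e..c} \<subseteq> connected_component_set (supp f) c"
    by (rule connected_component_maximal) (use e T in auto)
  have "connected_component_set (supp f) c \<in> components (supp f)"
    using asupp by (auto simp: components_iff)
  then have "connected_component_set (supp f) c \<subseteq> {a<..<c} \<or>
      connected_component_set (supp f) c \<inter> {a<..<c} = {}" using nested by blast
  moreover let ?z = "c-e"
  have "c \<in> {c-e..c}" "c - e \<in> {c-e..c}" using e by auto
  then have "c \<in> connected_component_set (supp f) c" "c - e \<in> connected_component_set (supp f) c"
    using C by (meson subsetD)+
  moreover have "?z \<in> {a<..<c}" using e by auto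
  ultimately show False by (metis IntI empty_iff greaterThanLessThan_iff less_irrefl subsetD)
qed

lemma comm_core:
  assumes "inj h" "inj k" "\<forall>x\<in>{a..c}. h x \<in> {a..c}" "\<forall>x\<in>{a..c}. k x \<in> {a..c}"
    "\<forall>y\<in>{a..c}. k y \<noteq> y \<longrightarrow> h y = y" "x \<in> {a..c}"
  shows "k (h x) = h (k x)"
proof (cases "k x = x")
  case False
  then have "h x = x" using assms by blast
  moreover have "k (k x) \<noteq> k x" using False assms(2) by (metis injD)
  then have "h (k x) = k x" using assms by blast
  ultimately show ?thesis by simp
next
  case True
  show ?thesis
  proof (rule ccontr)
    assume "k (h x) \<noteq> h (k x)"
    then have ne: "k (h x) \<noteq> h x" using True by simp
    then have "h (h x) = h x" using assms by blast
    then have "h x = x" using assms(1) by (metis injD)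
    then show False using ne True by simp
  qed
qed

lemma sm_pres:
  fixes f :: "real \<Rightarrow> real"
  assumes "strict_mono f" "bij f" "f a = a" "f c = c" "x \<in> {a..c}"
  shows "f x \<in> {a..c}" "inv f x \<in> {a..c}"
proof -
  show "f x \<in> {a..c}" using assms by (metis atLeastAtMost_iff strict_mono_less_eq)
  have "f (inv f x) = x" using assms(2) by (meson bij_inv_eq_iff)
  then show "inv f x \<in> {a..c}" using assms by (metis atLeastAtMost_iff strict_mono_less_eq)
qed

theorem lemma2p7:
  fixes f0 f1 :: "real \<Rightarrow> real" and a c :: real and n :: nat and b d :: "nat \<Rightarrow> real"
  assumes "PL0 f0" and "PL0 f1"
    and orb: "orbital f0 {a<..<c}" and notorb: "\<not> orbital f1 {a<..<c}"
    and nested: "\<forall>B. orbital f1 B \<longrightarrow> B \<subseteq> {a<..<c} \<or> B \<inter> {a<..<c} = {}"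
    and n1: "n \<ge> 1"
    and list: "{B. orbital f1 B \<and> B \<subseteq> {a<..<c}} = (\<lambda>i. {b i<..<d i}) ` {1..n}"
    and incr: "\<forall>i\<in>{1..<n}. d i \<le> b (Suc i)"
    and cases:
      "(up_bump f0 {a<..<c} \<and> a < b 1
         \<and> (\<exists>p<c. \<forall>x\<in>{p..c}. f0 x = f1 x)
         \<and> d n = c
         \<and> (\<forall>p. p < c \<and> (\<forall>x\<in>{p..c}. f0 x = f1 x)
                 \<and> (\<forall>q. q < c \<and> (\<forall>x\<in>{q..c}. f0 x = f1 x) \<longrightarrow> p \<le> q)
               \<longrightarrow> f0 (b n) \<ge> p)
         \<and> f0 (b 1) > b n)
     \<or> (down_bump f0 {a<..<c} \<and> d n < c
         \<and> (\<exists>\<rho>>a. \<forall>x\<in>{a..\<rho>}. f0 x = f1 x)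
         \<and> b 1 = a
         \<and> (\<forall>\<rho>. \<rho> > a \<and> (\<forall>x\<in>{a..\<rho>}. f0 x = f1 x)
                 \<and> (\<forall>q. q > a \<and> (\<forall>x\<in>{a..q}. f0 x = f1 x) \<longrightarrow> q \<le> \<rho>)
               \<longrightarrow> f0 (d 1) \<le> \<rho>)
         \<and> f0 (d n) < d 1)"
  shows "\<forall>x\<in>{a..c}.
           comm (rmul f0 (inv f1)) (conjg f1 (rmul f0 f0)) x = x"
proof -
  note P0 = PL0_props[OF assms(1)] and P1 = PL0_props[OF assms(2)]
  have sm0: "strict_mono f0" and bij0: "bij f0" and sm1: "strict_mono f1" and bij1: "bij f1"
    using P0 P1 by auto
  have comp: "{a<..<c} \<in> components (supp f0)" using orb by (simp add: orbital_def)
  note cb = comp_boundary[OF comp]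
  have ac: "a < c" using cb by simp
  have f0a: "f0 a = a" and f0c: "f0 c = c" using cb by (auto simp: supp_def)
  have supp0: "supp f0 \<subseteq> {0<..<1}"
  proof
    fix x assume "x \<in> supp f0"
    then have "f0 x \<noteq> x" by (simp add: supp_def)
    moreover have "x \<in> {0..1}" using P0(4) calculation by blast
    moreover have "x \<noteq> 0" "x \<noteq> 1" using P0(5,6) calculation by auto
    ultimately show "x \<in> {0<..<1}" by auto
  qed
  have acsub: "{a<..<c} \<subseteq> supp f0" using in_components_subset[OF comp] .
  then have "{a<..<c} \<subseteq> {0<..<1}" using supp0 by auto
  then have "0 \<le> a \<and> c \<le> 1" using ac greaterThanLessThan_subseteq_greaterThanLessThan by blast
  then have a0: "0 \<le> a" and c1: "c \<le> 1" by auto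
  have cont1: "continuous_on {a..c} f1" using P1(3) by (rule continuous_on_subset) (use a0 c1 in auto)
  have cont0: "continuous_on {a..c} f0" using P0(3) by (rule continuous_on_subset) (use a0 c1 in auto)
  have nested': "\<forall>B. B \<in> components (supp f1) \<longrightarrow> B \<subseteq> {a<..<c} \<or> B \<inter> {a<..<c} = {}"
    using nested by (simp add: orbital_def)
  have f1a: "f1 a = a" by (rule fix_left[OF cont1 ac nested'])
  have f1c: "f1 c = c" by (rule fix_right[OF cont1 ac nested'])
  define F where "F = f0 \<circ> f0"
  have smF: "strict_mono F" using sm0 unfolding F_def strict_mono_def by auto
  have bijF: "bij F" unfolding F_def by (rule bij_comp[OF bij0 bij0])
  have Fa: "F a = a" and Fc: "F c = c" using f0a f0c by (auto simp: F_def)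
  define h where "h = inv f1 \<circ> f0"
  define k where "k = F \<circ> (f1 \<circ> inv F)"
  have bijh: "bij h" unfolding h_def using bij0 bij_imp_bij_inv[OF bij1] by (rule bij_comp)
  have bijk: "bij k" unfolding k_def using bij_comp[OF bij_imp_bij_inv[OF bijF] bij1] bijF by (rule bij_comp)
  have hpres: "\<forall>x\<in>{a..c}. h x \<in> {a..c}"
    unfolding h_def using sm_pres[OF sm0 bij0 f0a f0c] sm_pres[OF sm1 bij1 f1a f1c] by auto
  have kpres: "\<forall>x\<in>{a..c}. k x \<in> {a..c}"
    unfolding k_def using sm_pres[OF smF bijF Fa Fc] sm_pres[OF sm1 bij1 f1a f1c] by auto
  have compj: "{b j<..<d j} \<in> components (supp f1)" if "j \<in> {1..n}" for j
  proof -
    have "{b j<..<d j} \<in> {B. orbital f1 B \<and> B \<subseteq> {a<..<c}}" using list that by blast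
    then show ?thesis by (simp add: orbital_def)
  qed
  have bd: "b j < d j" "b j \<notin> supp f1" "d j \<notin> supp f1" if "j \<in> {1..n}" for j
    using comp_boundary[OF compj[OF that]] by auto
  have mono: "b i \<le> b j \<and> d i \<le> d j" if "1 \<le> i" "i \<le> j" "j \<le> n" for i j
    using that(2,3)
  proof (induction j rule: dec_induct)
    case base then show ?case by simp
  next
    case (step m)
    have "d m \<le> b (Suc m)" using incr step that(1) by auto
    moreover have "b m < d m" "b (Suc m) < d (Suc m)" using bd step that(1) by auto
    ultimately show ?case using step by auto
  qed
  have zloc: "b 1 < z \<and> z < d n" if "z \<in> supp f1" "z \<in> {a<..<c}" for z
  proof -
    let ?B = "connected_component_set (supp f1) z"
    have Bc: "?B \<in> components (supp f1)" using that(1) by (auto simp: components_iff)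
    have "z \<in> ?B" using that(1) by simp
    then have "?B \<subseteq> {a<..<c}" using nested' Bc that(2) by blast
    then have "?B \<in> {B. orbital f1 B \<and> B \<subseteq> {a<..<c}}" using Bc by (simp add: orbital_def)
    then obtain i where i: "i \<in> {1..n}" "?B = {b i<..<d i}" using list by auto
    then have "b i < z" "z < d i" using \<open>z \<in> ?B\<close> by auto
    moreover have "b 1 \<le> b i" "d i \<le> d n" using mono[of 1 i] mono[of i n] i n1 by auto
    ultimately show ?thesis by simp
  qed
  have Fzin: "F z \<in> {a..c}" if "z \<in> {a<..<c}" for z
    using sm_pres[OF smF bijF Fa Fc, of z] that by auto
  have region: "f0 (F z) = f1 (F z)" if zs: "z \<in> supp f1" and zi: "z \<in> {a<..<c}" for z
    using cases
  proof
    assume up: "up_bump f0 {a<..<c} \<and> a < b 1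
         \<and> (\<exists>p<c. \<forall>x\<in>{p..c}. f0 x = f1 x)
         \<and> d n = c
         \<and> (\<forall>p. p < c \<and> (\<forall>x\<in>{p..c}. f0 x = f1 x)
                 \<and> (\<forall>q. q < c \<and> (\<forall>x\<in>{q..c}. f0 x = f1 x) \<longrightarrow> p \<le> q)
               \<longrightarrow> f0 (b n) \<ge> p)
         \<and> f0 (b 1) > b n"
    then obtain p0 where p0: "p0 < c" "\<forall>x\<in>{p0..c}. f0 x = f1 x" by blast
    have ab1: "a < b 1" and dnc: "d n = c" and fb: "f0 (b 1) > b n" using up by blast+
    have hyp: "\<forall>p. p < c \<and> (\<forall>x\<in>{p..c}. f0 x = f1 x)
                 \<and> (\<forall>q. q < c \<and> (\<forall>x\<in>{q..c}. f0 x = f1 x) \<longrightarrow> p \<le> q)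
               \<longrightarrow> f0 (b n) \<ge> p" using up by blast
    have n1': "1 \<in> {1..n}" "n \<in> {1..n}" using n1 by auto
    have b1in: "b 1 \<in> {a<..<c}" using ab1 dnc bd(1)[OF n1'(1)] mono[of 1 n] n1 by auto
    have b1ne: "f0 (b 1) \<noteq> f1 (b 1)"
    proof -
      have "f0 (b 1) \<noteq> b 1" using b1in acsub by (auto simp: supp_def)
      moreover have "f1 (b 1) = b 1" using bd(2)[OF n1'(1)] by (simp add: supp_def)
      ultimately show ?thesis by simp
    qed
    define Q where "Q = {q. q < c \<and> (\<forall>x\<in>{q..c}. f0 x = f1 x)}"
    have Qlb: "b 1 < q" if "q \<in> Q" for q
    proof (rule ccontr)
      assume "\<not> b 1 < q"
      then have "b 1 \<in> {q..c}" using b1in by auto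
      then show False using that b1ne by (auto simp: Q_def)
    qed
    have Qne: "Q \<noteq> {}" "p0 \<in> Q" using p0 by (auto simp: Q_def)
    have bddQ: "bdd_below Q" using Qlb by (meson bdd_belowI less_imp_le)
    define P where "P = Inf Q"
    have Pp0: "P \<le> p0" unfolding P_def using bddQ Qne by (simp add: cInf_lower)
    have Pb1: "b 1 \<le> P" unfolding P_def using Qne Qlb by (meson cInf_greatest less_imp_le)
    have gt: "f0 x = f1 x" if tx: "P < x" "x \<le> c" for x
    proof -
      obtain q where "q \<in> Q" "q < x" using tx(1) cInf_less_iff[OF Qne(1) bddQ] by (auto simp: P_def)
      then show ?thesis using tx(2) by (auto simp: Q_def)
    qed
    have atP: "\<forall>x\<in>{P..c}. f0 x = f1 x"
    proof -
      define E where "E = {x \<in> {a..c}. (\<lambda>x. f0 x - f1 x) x = 0}"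
      have "closed E" unfolding E_def
        by (rule continuous_closed_preimage_constant) (use cont0 cont1 in \<open>auto intro: continuous_intros\<close>)
      moreover have "{P<..c} \<subseteq> E" using gt Pb1 b1in by (auto simp: E_def)
      ultimately have "closure {P<..c} \<subseteq> E" by (rule closure_minimal[rotated])
      then have "{P..c} \<subseteq> E" using Pp0 p0 by simp
      then show ?thesis by (auto simp: E_def)
    qed
    have PQ: "P < c" using Pp0 p0 by simp
    have Pmin: "\<forall>q. q < c \<and> (\<forall>x\<in>{q..c}. f0 x = f1 x) \<longrightarrow> P \<le> q"
      unfolding P_def using bddQ by (auto simp: Q_def intro: cInf_lower)
    have Pbn: "P \<le> f0 (b n)" using hyp PQ atP Pmin by blast
    have "b 1 < z" using zloc[OF zs zi] by simp
    then have "f0 (b 1) < f0 z" using sm0 by (simp add: strict_mono_less)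
    then have "b n < f0 z" using fb by simp
    then have "f0 (b n) < f0 (f0 z)" using sm0 by (simp add: strict_mono_less)
    then have "P < F z" using Pbn by (simp add: F_def)
    moreover have "F z \<le> c" using Fzin[OF zi] by simp
    ultimately show ?thesis using gt by blast
  next
    assume dn: "down_bump f0 {a<..<c} \<and> d n < c
         \<and> (\<exists>\<rho>>a. \<forall>x\<in>{a..\<rho>}. f0 x = f1 x)
         \<and> b 1 = a
         \<and> (\<forall>\<rho>. \<rho> > a \<and> (\<forall>x\<in>{a..\<rho>}. f0 x = f1 x)
                 \<and> (\<forall>q. q > a \<and> (\<forall>x\<in>{a..q}. f0 x = f1 x) \<longrightarrow> q \<le> \<rho>)
               \<longrightarrow> f0 (d 1) \<le> \<rho>)
         \<and> f0 (d n) < d 1"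
    then obtain p0 where p0: "p0 > a" "\<forall>x\<in>{a..p0}. f0 x = f1 x" by blast
    have dnc: "d n < c" and b1a: "b 1 = a" and fd: "f0 (d n) < d 1" using dn by blast+
    have hyp: "\<forall>\<rho>. \<rho> > a \<and> (\<forall>x\<in>{a..\<rho>}. f0 x = f1 x)
                 \<and> (\<forall>q. q > a \<and> (\<forall>x\<in>{a..q}. f0 x = f1 x) \<longrightarrow> q \<le> \<rho>)
               \<longrightarrow> f0 (d 1) \<le> \<rho>" using dn by blast
    have n1': "1 \<in> {1..n}" "n \<in> {1..n}" using n1 by auto
    have dnin: "d n \<in> {a<..<c}" using dnc b1a bd(1)[OF n1'(2)] mono[of 1 n] n1 by auto
    have dnne: "f0 (d n) \<noteq> f1 (d n)"
    proof -
      have "f0 (d n) \<noteq> d n" using dnin acsub by (auto simp: supp_def)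
      moreover have "f1 (d n) = d n" using bd(3)[OF n1'(2)] by (simp add: supp_def)
      ultimately show ?thesis by simp
    qed
    define Q where "Q = {q. q > a \<and> (\<forall>x\<in>{a..q}. f0 x = f1 x)}"
    have Qub: "q < d n" if "q \<in> Q" for q
    proof (rule ccontr)
      assume "\<not> q < d n"
      then have "d n \<in> {a..q}" using dnin by auto
      then show False using that dnne by (auto simp: Q_def)
    qed
    have Qne: "Q \<noteq> {}" "p0 \<in> Q" using p0 by (auto simp: Q_def)
    have bddQ: "bdd_above Q" using Qub by (meson bdd_aboveI less_imp_le)
    define P where "P = Sup Q"
    have Pp0: "p0 \<le> P" unfolding P_def using bddQ Qne by (simp add: cSup_upper)
    have Pdn: "P \<le> d n" unfolding P_def using Qne Qub by (meson cSup_least less_imp_le)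
    have lt: "f0 x = f1 x" if tx: "x < P" "a \<le> x" for x
    proof -
      obtain q where "q \<in> Q" "x < q" using tx(1) less_cSup_iff[OF Qne(1) bddQ] by (auto simp: P_def)
      then show ?thesis using tx(2) by (auto simp: Q_def)
    qed
    have atP: "\<forall>x\<in>{a..P}. f0 x = f1 x"
    proof -
      define E where "E = {x \<in> {a..c}. (\<lambda>x. f0 x - f1 x) x = 0}"
      have "closed E" unfolding E_def
        by (rule continuous_closed_preimage_constant) (use cont0 cont1 in \<open>auto intro: continuous_intros\<close>)
      moreover have "{a..<P} \<subseteq> E" using lt Pdn dnin by (auto simp: E_def)
      ultimately have "closure {a..<P} \<subseteq> E" by (rule closure_minimal[rotated])
      then have "{a..P} \<subseteq> E" using Pp0 p0 by simp
      then show ?thesis by (auto simp: E_def)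
    qed
    have PQ: "P > a" using Pp0 p0 by simp
    have Pmax: "\<forall>q. q > a \<and> (\<forall>x\<in>{a..q}. f0 x = f1 x) \<longrightarrow> q \<le> P"
      unfolding P_def using bddQ by (auto simp: Q_def intro: cSup_upper)
    have Pd1: "f0 (d 1) \<le> P" using hyp PQ atP Pmax by blast
    have "z < d n" using zloc[OF zs zi] by simp
    then have "f0 z < f0 (d n)" using sm0 by (simp add: strict_mono_less)
    then have "f0 z < d 1" using fd by simp
    then have "f0 (f0 z) < f0 (d 1)" using sm0 by (simp add: strict_mono_less)
    then have "F z < P" using Pd1 by (simp add: F_def)
    moreover have "a \<le> F z" using Fzin[OF zi] by simp
    ultimately show ?thesis using lt by blast
  qed
  have disj: "\<forall>y\<in>{a..c}. k y \<noteq> y \<longrightarrow> h y = y"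
  proof (intro ballI impI)
    fix y assume y: "y \<in> {a..c}" "k y \<noteq> y"
    define z where "z = inv F y"
    have Fz: "F z = y" unfolding z_def using bijF by (meson bij_inv_eq_iff)
    have zac: "z \<in> {a..c}" unfolding z_def using sm_pres[OF smF bijF Fa Fc y(1)] by simp
    have "k y = F (f1 z)" by (simp add: k_def z_def)
    then have "f1 z \<noteq> z" using y Fz by auto
    then have zs: "z \<in> supp f1" by (simp add: supp_def)
    have "z \<noteq> a" "z \<noteq> c" using \<open>f1 z \<noteq> z\<close> f1a f1c by auto
    then have "z \<in> {a<..<c}" using zac by auto
    then have "f0 y = f1 y" using region[OF zs] Fz by simp
    then show "h y = y" using bij1 by (simp add: h_def bij_is_inj)
  qed
  have key: "k (h x) = h (k x)" if "x \<in> {a..c}" for x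
    by (rule comm_core[OF bij_is_inj[OF bijh] bij_is_inj[OF bijk] hpres kpres disj that])
  show ?thesis
  proof
    fix x assume x: "x \<in> {a..c}"
    have "comm (rmul f0 (inv f1)) (conjg f1 (rmul f0 f0)) x = inv k (inv h (k (h x)))"
      by (simp add: comm_def conjg_def rmul_def h_def k_def F_def)
    also have "\<dots> = x" using key[OF x] bij_is_inj[OF bijh] bij_is_inj[OF bijk] by simp
    finally show "comm (rmul f0 (inv f1)) (conjg f1 (rmul f0 f0)) x = x" .
  qed
qed
end
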